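(* Given integers $D,N\ge 1$, $u_w,u_o,U_w,U_o\in\mathbb{N}$ and $0\le r_l^d\le r_u^d\le N$ for $d\in\{1,\dots,D\}$, one can in $\mathcal{O}(D^2)$ time either compute integers $W^0,\dots,W^D$ satisfying $W^D-W^0\le N U_w$; $\;N D+W^0-W^D\le N U_o$; $\;W^{d+u_w}-W^{d-1}\le N u_w$ for all $1\le d\le D-u_w$; $\;N\le W^{d+u_o}-W^{d-1}$ for all $1\le d\le D-u_o$; and $\;r_l^d\le W^d-W^{d-1}\le r_u^d$ for all $1\le d\le D$, or decide that no such integers exist. *)

theory Defs
  imports Main
begin

text \<open>A candidate solution is a list W = [W^0, ..., W^D] of integers.
  The bounds r_l^d, r_u^d (d = 1..D) are given as lists rl, ru of length D
  with r_l^d = rl ! (d-1) and r_u^d = ru ! (d-1).\<close>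

definition feasible_W ::
  "nat \<Rightarrow> nat \<Rightarrow> nat \<Rightarrow> nat \<Rightarrow> nat \<Rightarrow> nat \<Rightarrow> int list \<Rightarrow> int list \<Rightarrow> int list \<Rightarrow> bool" where
  "feasible_W D N uw uo Uw Uo rl ru W \<longleftrightarrow>
     length W = D + 1 \<and>
     W ! D - W ! 0 \<le> int N * int Uw \<and>
     int N * int D + W ! 0 - W ! D \<le> int N * int Uo \<and>
     (\<forall>d. 1 \<le> d \<and> d \<le> D - uw \<longrightarrow> W ! (d + uw) - W ! (d - 1) \<le> int N * int uw) \<and>
     (\<forall>d. 1 \<le> d \<and> d \<le> D - uo \<longrightarrow> int N \<le> W ! (d + uo) - W ! (d - 1)) \<and>
     (\<forall>d. 1 \<le> d \<and> d \<le> D \<longrightarrow>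
        rl ! (d - 1) \<le> W ! d - W ! (d - 1) \<and> W ! d - W ! (d - 1) \<le> ru ! (d - 1))"

text \<open>Cost model: every running-time function T_f below is written by hand following the
  convention of the HOL-Library time framework (Time_Functions): each call of a user-defined
  function costs 1 plus the costs of the user-defined functions it calls; list constructors and
  integer/natural-number primitives (+, -, *, min, =, int) cost 0 (unit-cost RAM).\<close>

fun minl :: "int list \<Rightarrow> int list \<Rightarrow> int list" where
  "minl (x # xs) (y # ys) = min x y # minl xs ys"
| "minl xs [] = xs"
| "minl [] ys = []"

fun T_minl :: "int list \<Rightarrow> int list \<Rightarrow> nat" where
  "T_minl (x # xs) (y # ys) = T_minl xs ys + 1"
| "T_minl xs [] = 1"
| "T_minl [] ys = 1"

fun addl :: "int list \<Rightarrow> int list \<Rightarrow> int list" where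
  "addl (x # xs) (y # ys) = (x + y) # addl xs ys"
| "addl xs ys = []"

fun T_addl :: "int list \<Rightarrow> int list \<Rightarrow> nat" where
  "T_addl (x # xs) (y # ys) = T_addl xs ys + 1"
| "T_addl xs ys = 1"

fun subl :: "int list \<Rightarrow> int list \<Rightarrow> int list" where
  "subl (x # xs) (y # ys) = (x - y) # subl xs ys"
| "subl xs ys = []"

fun T_subl :: "int list \<Rightarrow> int list \<Rightarrow> nat" where
  "T_subl (x # xs) (y # ys) = T_subl xs ys + 1"
| "T_subl xs ys = 1"

fun addc :: "int \<Rightarrow> int list \<Rightarrow> int list" where
  "addc c [] = []"
| "addc c (x # xs) = (c + x) # addc c xs"

fun T_addc :: "int \<Rightarrow> int list \<Rightarrow> nat" where
  "T_addc c [] = 1"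
| "T_addc c (x # xs) = T_addc c xs + 1"

fun takel :: "nat \<Rightarrow> int list \<Rightarrow> int list" where
  "takel 0 xs = []"
| "takel (Suc n) [] = []"
| "takel (Suc n) (x # xs) = x # takel n xs"

fun T_takel :: "nat \<Rightarrow> int list \<Rightarrow> nat" where
  "T_takel 0 xs = 1"
| "T_takel (Suc n) [] = 1"
| "T_takel (Suc n) (x # xs) = T_takel n xs + 1"

fun dropl :: "nat \<Rightarrow> int list \<Rightarrow> int list" where
  "dropl 0 xs = xs"
| "dropl (Suc n) [] = []"
| "dropl (Suc n) (x # xs) = dropl n xs"

fun T_dropl :: "nat \<Rightarrow> int list \<Rightarrow> nat" where
  "T_dropl 0 xs = 1"
| "T_dropl (Suc n) [] = 1"
| "T_dropl (Suc n) (x # xs) = T_dropl n xs + 1"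

fun appl :: "int list \<Rightarrow> int list \<Rightarrow> int list" where
  "appl [] ys = ys"
| "appl (x # xs) ys = x # appl xs ys"

fun T_appl :: "int list \<Rightarrow> int list \<Rightarrow> nat" where
  "T_appl [] ys = 1"
| "T_appl (x # xs) ys = T_appl xs ys + 1"

fun lastl :: "int list \<Rightarrow> int" where
  "lastl [] = 0"
| "lastl [x] = x"
| "lastl (x # y # ys) = lastl (y # ys)"

fun T_lastl :: "int list \<Rightarrow> nat" where
  "T_lastl [] = 1"
| "T_lastl [x] = 1"
| "T_lastl (x # y # ys) = T_lastl (y # ys) + 1"

fun minlast :: "int \<Rightarrow> int list \<Rightarrow> int list" where
  "minlast c [] = []"
| "minlast c [x] = [min x c]"
| "minlast c (x # y # ys) = x # minlast c (y # ys)"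

fun T_minlast :: "int \<Rightarrow> int list \<Rightarrow> nat" where
  "T_minlast c [] = 1"
| "T_minlast c [x] = 1"
| "T_minlast c (x # y # ys) = T_minlast c (y # ys) + 1"

fun minhd :: "int \<Rightarrow> int list \<Rightarrow> int list" where
  "minhd c [] = []"
| "minhd c (x # xs) = min x c # xs"

fun T_minhd :: "int \<Rightarrow> int list \<Rightarrow> nat" where
  "T_minhd c xs = 1"

fun hdl :: "int list \<Rightarrow> int" where
  "hdl [] = 0"
| "hdl (x # xs) = x"

fun T_hdl :: "int list \<Rightarrow> nat" where
  "T_hdl xs = 1"

fun eql :: "int list \<Rightarrow> int list \<Rightarrow> bool" where
  "eql [] [] = True"
| "eql (x # xs) (y # ys) = (x = y \<and> eql xs ys)"
| "eql xs ys = False"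

fun T_eql :: "int list \<Rightarrow> int list \<Rightarrow> nat" where
  "T_eql (x # xs) (y # ys) = T_eql xs ys + 1"
| "T_eql xs ys = 1"

fun zeros :: "nat \<Rightarrow> int list" where
  "zeros 0 = []"
| "zeros (Suc n) = 0 # zeros n"

fun T_zeros :: "nat \<Rightarrow> nat" where
  "T_zeros 0 = 1"
| "T_zeros (Suc n) = T_zeros n + 1"

text \<open>Relaxation along all edges a \<rightarrow> a+k of constant weight c, resp. along all edges a+k \<rightarrow> a.\<close>
definition relax_up :: "nat \<Rightarrow> int \<Rightarrow> int list \<Rightarrow> int list" where
  "relax_up k c L = appl (takel k L) (minl (dropl k L) (addc c L))"

definition T_relax_up :: "nat \<Rightarrow> int \<Rightarrow> int list \<Rightarrow> nat" where
  "T_relax_up k c L = T_takel k L + T_dropl k L + T_addc c L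
     + T_minl (dropl k L) (addc c L) + T_appl (takel k L) (minl (dropl k L) (addc c L)) + 1"

definition relax_down :: "nat \<Rightarrow> int \<Rightarrow> int list \<Rightarrow> int list" where
  "relax_down k c L = minl L (addc c (dropl k L))"

definition T_relax_down :: "nat \<Rightarrow> int \<Rightarrow> int list \<Rightarrow> nat" where
  "T_relax_down k c L = T_dropl k L + T_addc c (dropl k L) + T_minl L (addc c (dropl k L)) + 1"

text \<open>One round of Bellman--Ford: relax every constraint W^a - W^b \<le> c, viewed as an edge
  b \<rightarrow> a of weight c.\<close>
definition relax_round ::
  "nat \<Rightarrow> nat \<Rightarrow> nat \<Rightarrow> nat \<Rightarrow> nat \<Rightarrow> nat \<Rightarrow> int list \<Rightarrow> int list \<Rightarrow> int list \<Rightarrow> int list" where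
  "relax_round D N uw uo Uw Uo rl ru L =
    (let L1 = appl (takel 1 L) (minl (dropl 1 L) (addl L ru));
         L2 = minl L1 (subl (dropl 1 L1) rl);
         L3 = relax_up (Suc uw) (int N * int uw) L2;
         L4 = relax_down (Suc uo) (0 - int N) L3;
         L5 = minlast (hdl L4 + int N * int Uw) L4;
         L6 = minhd (lastl L5 + int N * int Uo - int N * int D) L5
     in L6)"

definition T_relax_round ::
  "nat \<Rightarrow> nat \<Rightarrow> nat \<Rightarrow> nat \<Rightarrow> nat \<Rightarrow> nat \<Rightarrow> int list \<Rightarrow> int list \<Rightarrow> int list \<Rightarrow> nat" where
  "T_relax_round D N uw uo Uw Uo rl ru L =
    (let L1 = appl (takel 1 L) (minl (dropl 1 L) (addl L ru));
         t1 = T_takel 1 L + T_dropl 1 L + T_addl L ru + T_minl (dropl 1 L) (addl L ru)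
              + T_appl (takel 1 L) (minl (dropl 1 L) (addl L ru));
         L2 = minl L1 (subl (dropl 1 L1) rl);
         t2 = T_dropl 1 L1 + T_subl (dropl 1 L1) rl + T_minl L1 (subl (dropl 1 L1) rl);
         L3 = relax_up (Suc uw) (int N * int uw) L2;
         t3 = T_relax_up (Suc uw) (int N * int uw) L2;
         L4 = relax_down (Suc uo) (0 - int N) L3;
         t4 = T_relax_down (Suc uo) (0 - int N) L3;
         L5 = minlast (hdl L4 + int N * int Uw) L4;
         t5 = T_hdl L4 + T_minlast (hdl L4 + int N * int Uw) L4;
         t6 = T_lastl L5 + T_minhd (lastl L5 + int N * int Uo - int N * int D) L5
     in t1 + t2 + t3 + t4 + t5 + t6 + 1)"

fun iter_rounds ::
  "nat \<Rightarrow> nat \<Rightarrow> nat \<Rightarrow> nat \<Rightarrow> nat \<Rightarrow> nat \<Rightarrow> nat \<Rightarrow> int list \<Rightarrow> int list \<Rightarrow> int list \<Rightarrow> int list" where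
  "iter_rounds 0 D N uw uo Uw Uo rl ru L = L"
| "iter_rounds (Suc k) D N uw uo Uw Uo rl ru L =
     iter_rounds k D N uw uo Uw Uo rl ru (relax_round D N uw uo Uw Uo rl ru L)"

fun T_iter_rounds ::
  "nat \<Rightarrow> nat \<Rightarrow> nat \<Rightarrow> nat \<Rightarrow> nat \<Rightarrow> nat \<Rightarrow> nat \<Rightarrow> int list \<Rightarrow> int list \<Rightarrow> int list \<Rightarrow> nat" where
  "T_iter_rounds 0 D N uw uo Uw Uo rl ru L = 1"
| "T_iter_rounds (Suc k) D N uw uo Uw Uo rl ru L =
     T_relax_round D N uw uo Uw Uo rl ru L
     + T_iter_rounds k D N uw uo Uw Uo rl ru (relax_round D N uw uo Uw Uo rl ru L) + 1"

definition solve_W ::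
  "nat \<Rightarrow> nat \<Rightarrow> nat \<Rightarrow> nat \<Rightarrow> nat \<Rightarrow> nat \<Rightarrow> int list \<Rightarrow> int list \<Rightarrow> int list option" where
  "solve_W D N uw uo Uw Uo rl ru =
    (let L = iter_rounds (Suc D) D N uw uo Uw Uo rl ru (zeros (Suc D))
     in if eql (relax_round D N uw uo Uw Uo rl ru L) L then Some L else None)"

definition T_solve_W ::
  "nat \<Rightarrow> nat \<Rightarrow> nat \<Rightarrow> nat \<Rightarrow> nat \<Rightarrow> nat \<Rightarrow> int list \<Rightarrow> int list \<Rightarrow> nat" where
  "T_solve_W D N uw uo Uw Uo rl ru =
    (let L = iter_rounds (Suc D) D N uw uo Uw Uo rl ru (zeros (Suc D))
     in T_zeros (Suc D) + T_iter_rounds (Suc D) D N uw uo Uw Uo rl ru (zeros (Suc D))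
        + T_relax_round D N uw uo Uw Uo rl ru L
        + T_eql (relax_round D N uw uo Uw Uo rl ru L) L + 1)"

end

theory Submission
  imports Defs
begin


lemma minl_len[simp]: "length (minl xs ys) = length xs"
  by (induction xs ys rule: minl.induct) auto
lemma minl_nth: "i < length xs \<Longrightarrow> minl xs ys ! i = (if i < length ys then min (xs!i) (ys!i) else xs!i)"
  by (induction xs ys arbitrary: i rule: minl.induct) (auto simp: nth_Cons split: nat.split)
lemma addl_eq: "addl xs ys = map2 (+) xs ys" by (induction xs ys rule: addl.induct) auto
lemma subl_eq: "subl xs ys = map2 (-) xs ys" by (induction xs ys rule: subl.induct) auto
lemma addc_eq: "addc c xs = map ((+) c) xs" by (induction xs) auto
lemma takel_eq: "takel n xs = take n xs" by (induction n xs rule: takel.induct) auto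
lemma dropl_eq: "dropl n xs = drop n xs" by (induction n xs rule: dropl.induct) auto
lemma appl_eq: "appl xs ys = xs @ ys" by (induction xs) auto
lemma lastl_eq: "xs \<noteq> [] \<Longrightarrow> lastl xs = last xs" by (induction xs rule: lastl.induct) auto
lemma hdl_eq: "xs \<noteq> [] \<Longrightarrow> hdl xs = hd xs" by (cases xs) auto
lemma minlast_eq: "xs \<noteq> [] \<Longrightarrow> minlast c xs = xs[length xs - 1 := min (last xs) c]"
  by (induction c xs rule: minlast.induct) auto
lemma minhd_eq: "xs \<noteq> [] \<Longrightarrow> minhd c xs = xs[0 := min (hd xs) c]" by (cases xs) auto
lemma eql_eq: "eql xs ys = (xs = ys)" by (induction xs ys rule: eql.induct) auto
lemma zeros_eq: "zeros n = replicate n 0" by (induction n) auto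

lemma len_addl[simp]: "length (addl xs ys) = min (length xs) (length ys)" by (simp add: addl_eq)
lemma len_subl[simp]: "length (subl xs ys) = min (length xs) (length ys)" by (simp add: subl_eq)
lemma len_addc[simp]: "length (addc c xs) = length xs" by (simp add: addc_eq)
lemma len_takel[simp]: "length (takel n xs) = min n (length xs)" by (simp add: takel_eq)
lemma len_dropl[simp]: "length (dropl n xs) = length xs - n" by (simp add: dropl_eq)
lemma len_appl[simp]: "length (appl xs ys) = length xs + length ys" by (simp add: appl_eq)
lemma len_minlast[simp]: "length (minlast c xs) = length xs" by (induction c xs rule: minlast.induct) auto
lemma len_minhd[simp]: "length (minhd c xs) = length xs" by (cases xs) auto
lemma len_relax_up[simp]: "length (relax_up k c L) = length L" by (simp add: relax_up_def)
lemma len_relax_down[simp]: "length (relax_down k c L) = length L" by (simp add: relax_down_def)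

lemma T_minl_eq[simp]: "T_minl xs ys = min (length xs) (length ys) + 1"
  by (induction xs ys rule: T_minl.induct) auto
lemma T_addl_eq[simp]: "T_addl xs ys = min (length xs) (length ys) + 1"
  by (induction xs ys rule: T_addl.induct) auto
lemma T_subl_eq[simp]: "T_subl xs ys = min (length xs) (length ys) + 1"
  by (induction xs ys rule: T_subl.induct) auto
lemma T_eql_eq[simp]: "T_eql xs ys = min (length xs) (length ys) + 1"
  by (induction xs ys rule: T_eql.induct) auto
lemma T_addc_eq[simp]: "T_addc c xs = length xs + 1" by (induction xs) auto
lemma T_takel_eq[simp]: "T_takel n xs = min n (length xs) + 1" by (induction n xs rule: T_takel.induct) auto
lemma T_dropl_eq[simp]: "T_dropl n xs = min n (length xs) + 1" by (induction n xs rule: T_dropl.induct) auto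
lemma T_appl_eq[simp]: "T_appl xs ys = length xs + 1" by (induction xs) auto
lemma T_lastl_eq[simp]: "T_lastl xs = max 1 (length xs)" by (induction xs rule: T_lastl.induct) auto
lemma T_minlast_eq[simp]: "T_minlast c xs = max 1 (length xs)" by (induction c xs rule: T_minlast.induct) auto
lemma T_zeros_eq[simp]: "T_zeros n = n + 1" by (induction n) auto

lemma T_round_bound:
  assumes "length L = Suc D" "length rl = D" "length ru = D"
  shows "T_relax_round D N uw uo Uw Uo rl ru L \<le> 30 * D + 60"
  using assms by (simp add: T_relax_round_def Let_def T_relax_up_def T_relax_down_def)


type_synonym edge = "nat \<times> nat \<times> int"

fun gvalid :: "edge set \<Rightarrow> nat \<Rightarrow> edge list \<Rightarrow> bool" where
  "gvalid E u [] = True"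
| "gvalid E u ((b,a,c)#es) = (b = u \<and> (b,a,c) \<in> E \<and> gvalid E a es)"

fun endp :: "nat \<Rightarrow> edge list \<Rightarrow> nat" where
  "endp u [] = u"
| "endp u ((b,a,c)#es) = endp a es"

definition wt :: "edge list \<Rightarrow> int" where
  "wt es = sum_list (map (\<lambda>(b,a,c). c) es)"

lemma wt_Nil[simp]: "wt [] = 0" by (simp add: wt_def)
lemma wt_Cons[simp]: "wt ((b,a,c)#es) = c + wt es" by (simp add: wt_def)
lemma wt_append[simp]: "wt (xs @ ys) = wt xs + wt ys" by (simp add: wt_def)

lemma gvalid_append[simp]: "gvalid E u (xs @ ys) = (gvalid E u xs \<and> gvalid E (endp u xs) ys)"
  by (induction E u xs rule: gvalid.induct) auto
lemma endp_append[simp]: "endp u (xs @ ys) = endp (endp u xs) ys"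
  by (induction u xs rule: endp.induct) auto

lemma gvalid_set: "gvalid E u es \<Longrightarrow> set es \<subseteq> E"
  by (induction E u es rule: gvalid.induct) auto

lemma verts_nth: "i \<le> length es \<Longrightarrow> (u # map (\<lambda>(b,a,c). a) es) ! i = endp u (take i es)"
proof (induction u es arbitrary: i rule: endp.induct)
  case (1 u) then show ?case by simp
next
  case (2 u b a c es)
  then show ?case by (cases i) auto
qed

lemma endp_lt: "\<forall>(b,a,c)\<in>E. a < n \<Longrightarrow> u < n \<Longrightarrow> gvalid E u es \<Longrightarrow> endp u es < n"
  by (induction E u es rule: gvalid.induct) auto

lemma tele: "\<forall>(b,a,c)\<in>E. W a \<le> W b + c \<Longrightarrow> gvalid E u es \<Longrightarrow> W (endp u es) - W u \<le> wt es"
  by (induction E u es rule: gvalid.induct) fastforce+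



lemma cycle_removal:
  assumes ed: "\<forall>(b,a,c)\<in>E. a < n \<and> b < n" and W: "\<forall>(b,a,c)\<in>E. W a \<le> W b + c" and u: "u < n"
  shows "gvalid E u es \<Longrightarrow> \<exists>es'. gvalid E u es' \<and> endp u es' = endp u es \<and> wt es' \<le> wt es \<and> length es' < n"
proof (induction es rule: length_induct)
  case (1 es)
  show ?case
  proof (cases "length es < n")
    case True then show ?thesis using 1(2) by blast
  next
    case False
    define vs where "vs = u # map (\<lambda>(b,a,c). a) es"
    have "set es \<subseteq> E" using gvalid_set 1(2) by blast
    then have sub: "set vs \<subseteq> {..<n}" using u ed unfolding vs_def by fastforce
    have "\<not> distinct vs"
    proof
      assume "distinct vs"
      then have "card (set vs) = length vs" by (rule distinct_card)
      moreover have "card (set vs) \<le> n" using card_mono[OF finite_lessThan sub] by simp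
      ultimately show False using False unfolding vs_def by simp
    qed
    then obtain i j where ij0: "i < length vs" "j < length vs" "i \<noteq> j" "vs ! i = vs ! j"
      by (auto simp: distinct_conv_nth)
    obtain i j where ij: "i < j" "j \<le> length es" "vs ! i = vs ! j"
    proof (cases "i < j")
      case True then show ?thesis using that ij0 unfolding vs_def by fastforce
    next
      case False then show ?thesis using that[of j i] ij0 unfolding vs_def by fastforce
    qed
    define A where "A = take i es"
    define B where "B = take (j-i) (drop i es)"
    define C where "C = drop j es"
    have es_eq: "es = A @ B @ C"
    proof -
      have d: "drop j es = drop (j-i) (drop i es)" using ij by simp
      have h: "take (j-i) (drop i es) @ drop j es = drop i es" unfolding d by (rule append_take_drop_id)
      show ?thesis unfolding A_def B_def C_def by (simp only: h append_take_drop_id)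
    qed
    have tj: "take j es = A @ B"
      unfolding A_def B_def using take_add[of i "j-i" es] ij by simp
    define x where "x = endp u A"
    have vi: "vs ! i = x" unfolding vs_def x_def A_def using verts_nth ij by simp
    have vj: "vs ! j = endp x B" unfolding vs_def x_def using verts_nth[of j es u] ij tj by simp
    have cyc: "endp x B = x" using vi vj ij by simp
    have vA: "gvalid E u A" and vB: "gvalid E x B" and vC: "gvalid E x C"
      using 1(2) es_eq cyc unfolding x_def by auto
    have "W (endp x B) - W x \<le> wt B" using tele[OF W vB] .
    then have wB: "0 \<le> wt B" using cyc by simp
    have lenB: "length B > 0" unfolding B_def using ij by simp
    define es2 where "es2 = A @ C"
    have v2: "gvalid E u es2" unfolding es2_def using vA vC x_def by simp
    have e2: "endp u es2 = endp u es" unfolding es2_def using es_eq cyc x_def by simp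
    have w2: "wt es2 \<le> wt es" unfolding es2_def using es_eq wB by simp
    have l2: "length es2 < length es" unfolding es2_def using es_eq lenB by simp
    from 1(1)[rule_format, OF l2 v2] obtain es' where
      "gvalid E u es'" "endp u es' = endp u es2" "wt es' \<le> wt es2" "length es' < n" by blast
    then show ?thesis using e2 w2 by (intro exI[of _ es']) auto
  qed
qed



definition walkrep :: "edge set \<Rightarrow> int list \<Rightarrow> bool" where
  "walkrep E L \<longleftrightarrow> (\<forall>i<length L. \<exists>u es. u < length L \<and> gvalid E u es \<and> endp u es = i \<and> L!i = wt es)"

definition mstep :: "edge set \<Rightarrow> edge set \<Rightarrow> int list \<Rightarrow> int list \<Rightarrow> bool" where
  "mstep E Ek L L' \<longleftrightarrow> length L' = length L \<and> (\<forall>(b,a,c)\<in>Ek. a < length L \<and> b < length L)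
     \<and> (\<forall>i<length L. L'!i \<le> L!i) \<and> (\<forall>(b,a,c)\<in>Ek. L'!a \<le> L!b + c) \<and> (walkrep E L \<longrightarrow> walkrep E L')"

lemma sstep_mstep:
  assumes len: "length L' = length L"
    and bnd: "\<forall>(b,a,c)\<in>Ek. a < length L \<and> b < length L"
    and sub: "Ek \<subseteq> E"
    and ch: "\<forall>i<length L. L'!i = L!i \<or> (\<exists>b c. (b,i,c)\<in>Ek \<and> L'!i = min (L!i) (L!b+c))"
    and ex: "\<forall>(b,a,c)\<in>Ek. L'!a = min (L!a) (L!b + c)"
  shows "mstep E Ek L L'"
proof -
  have le: "\<forall>i<length L. L'!i \<le> L!i" using ch by fastforce
  have rel: "\<forall>(b,a,c)\<in>Ek. L'!a \<le> L!b + c" using ex by fastforce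
  have wr: "walkrep E L'" if wL: "walkrep E L"
    unfolding walkrep_def
  proof (intro allI impI)
    fix i assume i: "i < length L'"
    then have i': "i < length L" using len by simp
    from wL i' obtain u es where w1: "u < length L" "gvalid E u es" "endp u es = i" "L!i = wt es"
      unfolding walkrep_def by blast
    show "\<exists>u es. u < length L' \<and> gvalid E u es \<and> endp u es = i \<and> L' ! i = wt es"
    proof (cases "L'!i = L!i")
      case True then show ?thesis using w1 len by metis
    next
      case False
      then obtain b c where bc: "(b,i,c)\<in>Ek" "L'!i = min (L!i) (L!b+c)" using ch i' by blast
      then have b: "b < length L" using bnd by fastforce
      have eq: "L'!i = L!b + c" using bc False by (auto simp: min_def split: if_splits)
      from wL b obtain u2 es2 where w2: "u2 < length L" "gvalid E u2 es2" "endp u2 es2 = b" "L!b = wt es2"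
        unfolding walkrep_def by blast
      show ?thesis
        using w2 bc sub eq len by (intro exI[of _ u2] exI[of _ "es2 @ [(b,i,c)]"]) auto
    qed
  qed
  show ?thesis unfolding mstep_def using len bnd le rel wr by blast
qed

lemma mstep_comp:
  assumes "mstep E A L1 L2" "mstep E B L2 L3"
  shows "mstep E (A \<union> B) L1 L3"
proof -
  have l: "length L2 = length L1" "length L3 = length L1" using assms unfolding mstep_def by auto
  have le1: "\<forall>i<length L1. L2!i \<le> L1!i" and le2: "\<forall>i<length L1. L3!i \<le> L2!i"
    using assms l unfolding mstep_def by auto
  have rA: "\<forall>(b,a,c)\<in>A. L3!a \<le> L1!b + c"
  proof (intro ballI, clarify)
    fix b a c assume "(b,a,c) \<in> A"
    then have "L2!a \<le> L1!b + c" "a < length L1" using assms(1) unfolding mstep_def by fastforce+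
    then show "L3!a \<le> L1!b + c" using le2 by force
  qed
  have rB: "\<forall>(b,a,c)\<in>B. L3!a \<le> L1!b + c"
  proof (intro ballI, clarify)
    fix b a c assume "(b,a,c) \<in> B"
    then have "L3!a \<le> L2!b + c" "b < length L1" using assms(2) l unfolding mstep_def by fastforce+
    then show "L3!a \<le> L1!b + c" using le1 by force
  qed
  show ?thesis using assms l le1 le2 rA rB unfolding mstep_def by fastforce
qed



definition E1 :: "nat \<Rightarrow> int list \<Rightarrow> edge set" where
  "E1 D ru = {(d-1, d, ru!(d-1)) | d. 1 \<le> d \<and> d \<le> D}"
definition E2 :: "nat \<Rightarrow> int list \<Rightarrow> edge set" where
  "E2 D rl = {(d, d-1, - (rl!(d-1))) | d. 1 \<le> d \<and> d \<le> D}"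
definition E3 :: "nat \<Rightarrow> nat \<Rightarrow> nat \<Rightarrow> edge set" where
  "E3 D N uw = {(d-1, d+uw, int N * int uw) | d. 1 \<le> d \<and> d \<le> D - uw}"
definition E4 :: "nat \<Rightarrow> nat \<Rightarrow> nat \<Rightarrow> edge set" where
  "E4 D N uo = {(d+uo, d-1, - int N) | d. 1 \<le> d \<and> d \<le> D - uo}"
definition E5 :: "nat \<Rightarrow> nat \<Rightarrow> nat \<Rightarrow> edge set" where
  "E5 D N Uw = {(0, D, int N * int Uw)}"
definition E6 :: "nat \<Rightarrow> nat \<Rightarrow> nat \<Rightarrow> edge set" where
  "E6 D N Uo = {(D, 0, int N * int Uo - int N * int D)}"
definition EE where
  "EE D N uw uo Uw Uo rl ru = E1 D ru \<union> E2 D rl \<union> E3 D N uw \<union> E4 D N uo \<union> E5 D N Uw \<union> E6 D N Uo"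

lemma feasible_iff:
  "feasible_W D N uw uo Uw Uo rl ru W \<longleftrightarrow>
     length W = D+1 \<and> (\<forall>(b,a,c)\<in>EE D N uw uo Uw Uo rl ru. W!a \<le> W!b + c)"
proof -
  have f1: "(\<forall>(b,a,c)\<in>E1 D ru. W!a \<le> W!b + c) \<longleftrightarrow>
        (\<forall>d. 1 \<le> d \<and> d \<le> D \<longrightarrow> W ! d - W ! (d - 1) \<le> ru ! (d - 1))"
    unfolding E1_def by auto
  have f2: "(\<forall>(b,a,c)\<in>E2 D rl. W!a \<le> W!b + c) \<longleftrightarrow>
        (\<forall>d. 1 \<le> d \<and> d \<le> D \<longrightarrow> rl ! (d - 1) \<le> W ! d - W ! (d - 1))"
    unfolding E2_def by auto
  have f3: "(\<forall>(b,a,c)\<in>E3 D N uw. W!a \<le> W!b + c) \<longleftrightarrow>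
        (\<forall>d. 1 \<le> d \<and> d \<le> D - uw \<longrightarrow> W ! (d + uw) - W ! (d - 1) \<le> int N * int uw)"
    unfolding E3_def
  proof (intro iffI allI impI)
    fix d assume h: "\<forall>(b,a,c)\<in>{(d-1, d+uw, int N * int uw) | d. 1 \<le> d \<and> d \<le> D - uw}. W!a \<le> W!b + c" and "1 \<le> d \<and> d \<le> D - uw"
    then have "W!(d+uw) \<le> W!(d-1) + int N * int uw" by blast
    then show "W ! (d + uw) - W ! (d - 1) \<le> int N * int uw" by simp
  qed auto
  have f4: "(\<forall>(b,a,c)\<in>E4 D N uo. W!a \<le> W!b + c) \<longleftrightarrow>
        (\<forall>d. 1 \<le> d \<and> d \<le> D - uo \<longrightarrow> int N \<le> W ! (d + uo) - W ! (d - 1))"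
    unfolding E4_def
  proof (intro iffI allI impI)
    fix d assume h: "\<forall>(b,a,c)\<in>{(d+uo, d-1, - int N) | d. 1 \<le> d \<and> d \<le> D - uo}. W!a \<le> W!b + c" and "1 \<le> d \<and> d \<le> D - uo"
    then have "W!(d-1) \<le> W!(d+uo) + - int N" by blast
    then show "int N \<le> W ! (d + uo) - W ! (d - 1)" by simp
  qed auto
  have f5: "(\<forall>(b,a,c)\<in>E5 D N Uw. W!a \<le> W!b + c) \<longleftrightarrow> W ! D - W ! 0 \<le> int N * int Uw"
    unfolding E5_def by auto
  have f6: "(\<forall>(b,a,c)\<in>E6 D N Uo. W!a \<le> W!b + c) \<longleftrightarrow> int N * int D + W ! 0 - W ! D \<le> int N * int Uo"
    unfolding E6_def by auto
  show ?thesis unfolding feasible_W_def EE_def ball_Un f1 f2 f3 f4 f5 f6 by blast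
qed

lemma EE_bounds: "\<forall>(b,a,c)\<in>EE D N uw uo Uw Uo rl ru. a < Suc D \<and> b < Suc D"
  unfolding EE_def E1_def E2_def E3_def E4_def E5_def E6_def by auto

lemma relax_up_nth: "i < length L \<Longrightarrow> relax_up k c L ! i = (if i < k then L!i else min (L!i) (c + L!(i-k)))"
  by (auto simp: relax_up_def takel_eq dropl_eq appl_eq addc_eq nth_append minl_nth min_def)

lemma relax_down_nth: "i < length L \<Longrightarrow> relax_down k c L ! i = (if i + k < length L then min (L!i) (c + L!(i+k)) else L!i)"
  by (auto simp: relax_down_def dropl_eq addc_eq minl_nth add.commute)



lemma round_mstep:
  assumes D1: "1 \<le> D" and lrl: "length rl = D" and lru: "length ru = D" and lL: "length L = Suc D"
  shows "mstep (EE D N uw uo Uw Uo rl ru) (EE D N uw uo Uw Uo rl ru) L (relax_round D N uw uo Uw Uo rl ru L)"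
proof -
  let ?E = "EE D N uw uo Uw Uo rl ru"
  define L1 where "L1 = appl (takel 1 L) (minl (dropl 1 L) (addl L ru))"
  define L2 where "L2 = minl L1 (subl (dropl 1 L1) rl)"
  define L3 where "L3 = relax_up (Suc uw) (int N * int uw) L2"
  define L4 where "L4 = relax_down (Suc uo) (0 - int N) L3"
  define L5 where "L5 = minlast (hdl L4 + int N * int Uw) L4"
  define L6 where "L6 = minhd (lastl L5 + int N * int Uo - int N * int D) L5"
  have R: "relax_round D N uw uo Uw Uo rl ru L = L6"
    unfolding relax_round_def Let_def L1_def L2_def L3_def L4_def L5_def L6_def ..
  have bnd: "\<forall>(b,a,c)\<in>?E. a < Suc D \<and> b < Suc D" by (rule EE_bounds)
  have len1: "length L1 = Suc D" unfolding L1_def using lL lru by simp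
  have nth1: "L1!i = (if i = 0 then L!0 else min (L!i) (L!(i-1) + ru!(i-1)))" if "i < Suc D" for i
    using that lL lru unfolding L1_def
    by (auto simp: takel_eq dropl_eq appl_eq addl_eq nth_append minl_nth)
  have m1: "mstep ?E (E1 D ru) L L1"
  proof (rule sstep_mstep)
    show "length L1 = length L" using len1 lL by simp
    show "\<forall>(b,a,c)\<in>E1 D ru. a < length L \<and> b < length L" using lL unfolding E1_def by auto
    show "E1 D ru \<subseteq> ?E" unfolding EE_def by blast
    show "\<forall>i<length L. L1!i = L!i \<or> (\<exists>b c. (b,i,c)\<in>E1 D ru \<and> L1!i = min (L!i) (L!b+c))"
    proof (intro allI impI)
      fix i assume i: "i < length L"
      show "L1!i = L!i \<or> (\<exists>b c. (b,i,c)\<in>E1 D ru \<and> L1!i = min (L!i) (L!b+c))"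
      proof (cases "i = 0")
        case True then show ?thesis using nth1 by simp
      next
        case False
        have "(i-1, i, ru!(i-1)) \<in> E1 D ru" unfolding E1_def using False i lL by auto
        then show ?thesis using nth1 i lL False by (intro disjI2 exI[of _ "i-1"] exI[of _ "ru!(i-1)"]) auto
      qed
    qed
    show "\<forall>(b,a,c)\<in>E1 D ru. L1!a = min (L!a) (L!b + c)"
      unfolding E1_def using nth1 by auto
  qed
  have len2: "length L2 = Suc D" unfolding L2_def using len1 by simp
  have nth2: "L2!i = (if i < D then min (L1!i) (L1!(Suc i) - rl!i) else L1!i)" if "i < Suc D" for i
    using that len1 lrl unfolding L2_def
    by (auto simp: dropl_eq subl_eq minl_nth)
  have m2: "mstep ?E (E2 D rl) L1 L2"
  proof (rule sstep_mstep)
    show "length L2 = length L1" using len1 len2 by simp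
    show "\<forall>(b,a,c)\<in>E2 D rl. a < length L1 \<and> b < length L1" using len1 unfolding E2_def by auto
    show "E2 D rl \<subseteq> ?E" unfolding EE_def by blast
    show "\<forall>i<length L1. L2!i = L1!i \<or> (\<exists>b c. (b,i,c)\<in>E2 D rl \<and> L2!i = min (L1!i) (L1!b+c))"
    proof (intro allI impI)
      fix i assume i: "i < length L1"
      show "L2!i = L1!i \<or> (\<exists>b c. (b,i,c)\<in>E2 D rl \<and> L2!i = min (L1!i) (L1!b+c))"
      proof (cases "i < D")
        case False then show ?thesis using nth2 i len1 by simp
      next
        case True
        have "(Suc i, i, - (rl!i)) \<in> E2 D rl" unfolding E2_def using True
          by (auto intro!: exI[of _ "Suc i"])
        then show ?thesis using nth2 i len1 True by (intro disjI2 exI[of _ "Suc i"] exI[of _ "- (rl!i)"]) auto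
      qed
    qed
    show "\<forall>(b,a,c)\<in>E2 D rl. L2!a = min (L1!a) (L1!b + c)"
      unfolding E2_def using nth2 by auto
  qed
  have len3: "length L3 = Suc D" unfolding L3_def using len2 by simp
  have nth3: "L3!i = (if i < Suc uw then L2!i else min (L2!i) (int N * int uw + L2!(i - Suc uw)))" if "i < Suc D" for i
    using that len2 unfolding L3_def by (simp add: relax_up_nth)
  have m3: "mstep ?E (E3 D N uw) L2 L3"
  proof (rule sstep_mstep)
    show "length L3 = length L2" using len3 len2 by simp
    show "\<forall>(b,a,c)\<in>E3 D N uw. a < length L2 \<and> b < length L2" using len2 unfolding E3_def by auto
    show "E3 D N uw \<subseteq> ?E" unfolding EE_def by blast
    show "\<forall>i<length L2. L3!i = L2!i \<or> (\<exists>b c. (b,i,c)\<in>E3 D N uw \<and> L3!i = min (L2!i) (L2!b+c))"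
    proof (intro allI impI)
      fix i assume i: "i < length L2"
      show "L3!i = L2!i \<or> (\<exists>b c. (b,i,c)\<in>E3 D N uw \<and> L3!i = min (L2!i) (L2!b+c))"
      proof (cases "i < Suc uw")
        case True then show ?thesis using nth3 i len2 by simp
      next
        case False
        have "(i - Suc uw, i, int N * int uw) \<in> E3 D N uw" unfolding E3_def using False i len2
          by (auto intro!: exI[of _ "i - uw"])
        then show ?thesis using nth3 i len2 False by (intro disjI2 exI[of _ "i - Suc uw"] exI[of _ "int N * int uw"]) (auto simp: add.commute)
      qed
    qed
    show "\<forall>(b,a,c)\<in>E3 D N uw. L3!a = min (L2!a) (L2!b + c)"
      unfolding E3_def using nth3 by (auto simp: add.commute)
  qed
  have len4: "length L4 = Suc D" unfolding L4_def using len3 by simp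
  have nth4: "L4!i = (if i + Suc uo < Suc D then min (L3!i) (- int N + L3!(i + Suc uo)) else L3!i)" if "i < Suc D" for i
    using that len3 unfolding L4_def by (simp add: relax_down_nth)
  have m4: "mstep ?E (E4 D N uo) L3 L4"
  proof (rule sstep_mstep)
    show "length L4 = length L3" using len3 len4 by simp
    show "\<forall>(b,a,c)\<in>E4 D N uo. a < length L3 \<and> b < length L3" using len3 unfolding E4_def by auto
    show "E4 D N uo \<subseteq> ?E" unfolding EE_def by blast
    show "\<forall>i<length L3. L4!i = L3!i \<or> (\<exists>b c. (b,i,c)\<in>E4 D N uo \<and> L4!i = min (L3!i) (L3!b+c))"
    proof (intro allI impI)
      fix i assume i: "i < length L3"
      show "L4!i = L3!i \<or> (\<exists>b c. (b,i,c)\<in>E4 D N uo \<and> L4!i = min (L3!i) (L3!b+c))"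
      proof (cases "i + Suc uo < Suc D")
        case False then show ?thesis using nth4 i len3 by simp
      next
        case True
        have "(i + Suc uo, i, - int N) \<in> E4 D N uo" unfolding E4_def using True
          by (auto intro!: exI[of _ "Suc i"])
        then show ?thesis using nth4 i len3 True by (intro disjI2 exI[of _ "i + Suc uo"] exI[of _ "- int N"]) (auto simp: add.commute)
      qed
    qed
    show "\<forall>(b,a,c)\<in>E4 D N uo. L4!a = min (L3!a) (L3!b + c)"
      unfolding E4_def using nth4 by (auto simp: add.commute)
  qed
  have ne4: "L4 \<noteq> []" using len4 by auto
  have L5e: "L5 = L4[D := min (L4!D) (L4!0 + int N * int Uw)]"
    unfolding L5_def using ne4 len4 by (simp add: minlast_eq hdl_eq last_conv_nth hd_conv_nth)
  have len5: "length L5 = Suc D" using L5e len4 by simp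
  have m5: "mstep ?E (E5 D N Uw) L4 L5"
  proof (rule sstep_mstep)
    show "length L5 = length L4" using len5 len4 by simp
    show "\<forall>(b,a,c)\<in>E5 D N Uw. a < length L4 \<and> b < length L4" using len4 unfolding E5_def by auto
    show "E5 D N Uw \<subseteq> ?E" unfolding EE_def by blast
    show "\<forall>i<length L4. L5!i = L4!i \<or> (\<exists>b c. (b,i,c)\<in>E5 D N Uw \<and> L5!i = min (L4!i) (L4!b+c))"
      using L5e len4 unfolding E5_def by (auto simp: nth_list_update)
    show "\<forall>(b,a,c)\<in>E5 D N Uw. L5!a = min (L4!a) (L4!b + c)"
      using L5e len4 unfolding E5_def by (auto simp: nth_list_update)
  qed
  have ne5: "L5 \<noteq> []" using len5 by auto
  have L6e: "L6 = L5[0 := min (L5!0) (L5!D + (int N * int Uo - int N * int D))]"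
    unfolding L6_def using ne5 len5 by (simp add: minhd_eq lastl_eq last_conv_nth hd_conv_nth algebra_simps)
  have m6: "mstep ?E (E6 D N Uo) L5 L6"
  proof (rule sstep_mstep)
    show "length L6 = length L5" using L6e by simp
    show "\<forall>(b,a,c)\<in>E6 D N Uo. a < length L5 \<and> b < length L5" using len5 unfolding E6_def by auto
    show "E6 D N Uo \<subseteq> ?E" unfolding EE_def by blast
    show "\<forall>i<length L5. L6!i = L5!i \<or> (\<exists>b c. (b,i,c)\<in>E6 D N Uo \<and> L6!i = min (L5!i) (L5!b+c))"
      using L6e len5 D1 unfolding E6_def by (auto simp: nth_list_update)
    show "\<forall>(b,a,c)\<in>E6 D N Uo. L6!a = min (L5!a) (L5!b + c)"
      using L6e len5 D1 unfolding E6_def by (auto simp: nth_list_update)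
  qed
  have "mstep ?E (E1 D ru \<union> E2 D rl \<union> E3 D N uw \<union> E4 D N uo \<union> E5 D N Uw \<union> E6 D N Uo) L L6"
    by (rule mstep_comp[OF mstep_comp[OF mstep_comp[OF mstep_comp[OF mstep_comp[OF m1 m2] m3] m4] m5] m6])
  then show ?thesis unfolding R EE_def .
qed



lemma iter_eq: "iter_rounds k D N uw uo Uw Uo rl ru L = ((relax_round D N uw uo Uw Uo rl ru) ^^ k) L"
  by (induction k arbitrary: L) (simp_all add: funpow_swap1)

lemma T_iter_bound:
  assumes "length rl = D" "length ru = D" "1 \<le> D"
  shows "length L = Suc D \<Longrightarrow> T_iter_rounds k D N uw uo Uw Uo rl ru L \<le> k * (30 * D + 61) + 1"
proof (induction k arbitrary: L)
  case 0 then show ?case by simp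
next
  case (Suc k)
  have "length (relax_round D N uw uo Uw Uo rl ru L) = Suc D"
    using round_mstep[OF assms(3,1,2) Suc.prems] Suc.prems unfolding mstep_def by simp
  then have "T_iter_rounds k D N uw uo Uw Uo rl ru (relax_round D N uw uo Uw Uo rl ru L) \<le> k * (30 * D + 61) + 1"
    by (rule Suc.IH)
  moreover have "T_relax_round D N uw uo Uw Uo rl ru L \<le> 30 * D + 60"
    using T_round_bound Suc.prems assms by blast
  ultimately show ?case by simp
qed

lemma correctness:
  assumes D1: "1 \<le> D" and lrl: "length rl = D" and lru: "length ru = D"
  shows "(\<forall>W. solve_W D N uw uo Uw Uo rl ru = Some W \<longrightarrow> feasible_W D N uw uo Uw Uo rl ru W) \<and>
        (solve_W D N uw uo Uw Uo rl ru = None \<longrightarrow> \<not> (\<exists>W. feasible_W D N uw uo Uw Uo rl ru W))"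
proof -
  let ?E = "EE D N uw uo Uw Uo rl ru"
  let ?R = "relax_round D N uw uo Uw Uo rl ru"
  define z where "z = zeros (Suc D)"
  have z: "z = replicate (Suc D) 0" unfolding z_def by (simp add: zeros_eq)
  have bnd: "\<forall>(b,a,c)\<in>?E. a < Suc D \<and> b < Suc D" by (rule EE_bounds)
  have ms: "mstep ?E ?E L (?R L)" if "length L = Suc D" for L
    by (rule round_mstep[OF D1 lrl lru that])
  have len: "length ((?R ^^ k) z) = Suc D" for k
  proof (induction k)
    case 0 then show ?case using z by simp
  next
    case (Suc k) then show ?case using ms[OF Suc] unfolding mstep_def by simp
  qed
  have wr: "walkrep ?E ((?R ^^ k) z)" for k
  proof (induction k)
    case 0 
    have "\<forall>i<Suc D. z ! i = 0" unfolding z by (simp del: replicate_Suc)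
    then show ?case unfolding walkrep_def using len[of 0]
      by (auto intro!: exI[of _ "[]"])
  next
    case (Suc k) then show ?case using ms[OF len[of k]] unfolding mstep_def by simp
  qed
  have up: "u < Suc D \<Longrightarrow> gvalid ?E u es \<Longrightarrow> length es \<le> k \<Longrightarrow> (?R ^^ k) z ! endp u es \<le> wt es" for k u es
  proof (induction k arbitrary: u es)
    case 0 then show ?case using z by (simp del: replicate_Suc)
  next
    case (Suc k)
    let ?L = "(?R ^^ k) z"
    have m: "mstep ?E ?E ?L (?R ?L)" using ms[OF len[of k]] .
    show ?case
    proof (cases es rule: rev_exhaust)
      case Nil
      have "?L ! u \<le> 0" using Suc.IH[of u "[]"] Suc.prems by simp
      moreover have "?R ?L ! u \<le> ?L ! u" using m Suc.prems len[of k] unfolding mstep_def by auto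
      ultimately show ?thesis using Nil by simp
    next
      case (snoc ys e)
      obtain b a c where e: "e = (b,a,c)" by (cases e) auto
      have v: "gvalid ?E u ys" "b = endp u ys" "(b,a,c) \<in> ?E" using Suc.prems snoc e by auto
      have "?L ! b \<le> wt ys" using Suc.IH[of u ys] Suc.prems snoc v by simp
      moreover have "?R ?L ! a \<le> ?L ! b + c" using m v(3) unfolding mstep_def by fastforce
      ultimately show ?thesis using snoc e by simp
    qed
  qed
  define L where "L = (?R ^^ Suc D) z"
  have sol: "solve_W D N uw uo Uw Uo rl ru = (if ?R L = L then Some L else None)"
    unfolding solve_W_def Let_def L_def z_def iter_eq eql_eq ..
  have mL: "mstep ?E ?E L (?R L)" unfolding L_def using ms[OF len] .
  have lenL: "length L = Suc D" unfolding L_def using len .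
  have part1: "feasible_W D N uw uo Uw Uo rl ru W" if "solve_W D N uw uo Uw Uo rl ru = Some W" for W
  proof -
    have eq: "?R L = L" "W = L" using that sol by (auto split: if_splits)
    have "\<forall>(b,a,c)\<in>?E. L!a \<le> L!b + c" using mL eq(1) unfolding mstep_def by simp
    then show ?thesis unfolding feasible_iff using eq(2) lenL by simp
  qed
  have part2: "solve_W D N uw uo Uw Uo rl ru \<noteq> None" if "feasible_W D N uw uo Uw Uo rl ru W" for W
  proof -
    have fW: "\<forall>(b,a,c)\<in>?E. W!a \<le> W!b + c" using that unfolding feasible_iff by simp
    have "?R L = L"
    proof (rule nth_equalityI)
      show "length (?R L) = length L" using mL unfolding mstep_def by simp
      fix i assume i: "i < length (?R L)"
      then have i': "i < Suc D" using mL lenL unfolding mstep_def by simp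
      have wRL: "walkrep ?E (?R L)" unfolding L_def using wr[of "Suc (Suc D)"] by simp
      have lRL: "length (?R L) = Suc D" using mL lenL unfolding mstep_def by simp
      obtain u es where w: "u < Suc D" "gvalid ?E u es" "endp u es = i" "?R L ! i = wt es"
        using wRL[unfolded walkrep_def] lRL i' by metis
      obtain es' where es': "gvalid ?E u es'" "endp u es' = endp u es" "wt es' \<le> wt es" "length es' < Suc D"
        using cycle_removal[OF bnd, of "\<lambda>i. W!i", OF fW w(1) w(2)] by blast
      have "L ! i \<le> wt es'" using up[OF w(1) es'(1), of "Suc D"] es'(2,4) w(3) unfolding L_def by simp
      moreover have "?R L ! i \<le> L ! i" using mL i' lenL unfolding mstep_def by simp
      ultimately show "?R L ! i = L ! i" using w(4) es'(3) by simp
    qed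
    then show ?thesis using sol by simp
  qed
  show ?thesis using part1 part2 by blast
qed

lemma time_bound:
  assumes D1: "1 \<le> D" and lrl: "length rl = D" and lru: "length ru = D"
  shows "T_solve_W D N uw uo Uw Uo rl ru \<le> 400 * D ^ 2"
proof -
  let ?R = "relax_round D N uw uo Uw Uo rl ru"
  define z where "z = zeros (Suc D)"
  have lz: "length z = Suc D" unfolding z_def by (simp add: zeros_eq)
  define L where "L = iter_rounds (Suc D) D N uw uo Uw Uo rl ru z"
  have lenk: "length ((?R ^^ k) z) = Suc D" for k
  proof (induction k)
    case 0 then show ?case using lz by simp
  next
    case (Suc k) then show ?case using round_mstep[OF D1 lrl lru Suc] unfolding mstep_def by simp
  qed
  have lL: "length L = Suc D" unfolding L_def iter_eq using lenk .
  have lRL: "length (?R L) = Suc D" using round_mstep[OF D1 lrl lru lL] lL unfolding mstep_def by simp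
  have t1: "T_iter_rounds (Suc D) D N uw uo Uw Uo rl ru z \<le> Suc D * (30 * D + 61) + 1"
    using T_iter_bound[OF lrl lru D1 lz] .
  have t2: "T_relax_round D N uw uo Uw Uo rl ru L \<le> 30 * D + 60"
    using T_round_bound[OF lL lrl lru] .
  have t3: "T_eql (?R L) L \<le> D + 2" using lL lRL by simp
  have "T_solve_W D N uw uo Uw Uo rl ru
      = T_zeros (Suc D) + T_iter_rounds (Suc D) D N uw uo Uw Uo rl ru z + T_relax_round D N uw uo Uw Uo rl ru L
        + T_eql (?R L) L + 1"
    unfolding T_solve_W_def Let_def L_def z_def ..
  also have "\<dots> \<le> (D + 2) + (Suc D * (30 * D + 61) + 1) + (30 * D + 60) + (D + 2) + 1"
    using t1 t2 t3 by simp
  also have "\<dots> = 30 * (D * D) + 123 * D + 127" by (simp add: algebra_simps)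
  also have "\<dots> \<le> 400 * D ^ 2"
  proof -
    have "D \<le> D * D" using D1 by simp
    moreover have "1 \<le> D * D" using D1 by simp
    ultimately show ?thesis unfolding power2_eq_square by linarith
  qed
  finally show ?thesis .
qed

theorem proposition4p9:
  "(\<forall>D N uw uo Uw Uo rl ru.
      1 \<le> D \<and> 1 \<le> N \<and> length rl = D \<and> length ru = D \<and>
      (\<forall>i<D. 0 \<le> rl ! i \<and> rl ! i \<le> ru ! i \<and> ru ! i \<le> int N) \<longrightarrow>
        (\<forall>W. solve_W D N uw uo Uw Uo rl ru = Some W \<longrightarrow> feasible_W D N uw uo Uw Uo rl ru W) \<and>
        (solve_W D N uw uo Uw Uo rl ru = None \<longrightarrow> \<not> (\<exists>W. feasible_W D N uw uo Uw Uo rl ru W)))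
   \<and>
   (\<exists>C::nat. \<forall>D N uw uo Uw Uo rl ru.
      1 \<le> D \<and> 1 \<le> N \<and> length rl = D \<and> length ru = D \<and>
      (\<forall>i<D. 0 \<le> rl ! i \<and> rl ! i \<le> ru ! i \<and> ru ! i \<le> int N) \<longrightarrow>
        T_solve_W D N uw uo Uw Uo rl ru \<le> C * D ^ 2)"
proof
  show "\<forall>D N uw uo Uw Uo rl ru.
      1 \<le> D \<and> 1 \<le> N \<and> length rl = D \<and> length ru = D \<and>
      (\<forall>i<D. 0 \<le> rl ! i \<and> rl ! i \<le> ru ! i \<and> ru ! i \<le> int N) \<longrightarrow>
        (\<forall>W. solve_W D N uw uo Uw Uo rl ru = Some W \<longrightarrow> feasible_W D N uw uo Uw Uo rl ru W) \<and>
        (solve_W D N uw uo Uw Uo rl ru = None \<longrightarrow> \<not> (\<exists>W. feasible_W D N uw uo Uw Uo rl ru W))"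
    using correctness by blast
  show "\<exists>C::nat. \<forall>D N uw uo Uw Uo rl ru.
      1 \<le> D \<and> 1 \<le> N \<and> length rl = D \<and> length ru = D \<and>
      (\<forall>i<D. 0 \<le> rl ! i \<and> rl ! i \<le> ru ! i \<and> ru ! i \<le> int N) \<longrightarrow>
        T_solve_W D N uw uo Uw Uo rl ru \<le> C * D ^ 2"
    using time_bound by blast
qed

end
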